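(* Let $G_n$ and $T$ be as in the context, and let $k\geq n+2$. Let $W=v_0e_0v_1e_1\cdots e_{k-1}v_k$ be a walk in $T$ (so each $e_i$ is an arc of $T$ from $v_i$ to $v_{i+1}$). Then $l(e_0)\leq l(e_{n+1})$, where $l(e)$ denotes the label of the arc $e$.
   Context: Let $A$ be a finite alphabet with a linear order $<$, extended to the lexicographic order on words. Let $\mathcal{F}$ be a set of words over $A$ (forbidden words). A word $w$ is in the language if the bi-infinite periodic sequence $\cdots www\cdots$ contains no element of $\mathcal{F}$ as a factor; $W_k$ denotes the set of words of length $k$ in the language. Fix $n\geq 1$ and consider the digraph with vertex set $A^n$ and arcs $(as,sb)$ for $a,b\in A$, $s\in A^{n-1}$, $asb\in W_{n+1}$, the label of $(as,sb)$ being $b$. The de Bruijn graph of span $n$, $G_n$, is a strongly connected component of maximum size of this digraph; vertices are identified with their words. Let $m$ be the vertex of $G_n$ whose word is lexicographically largest. For each vertex $v$, let $e(v)$ be the arc of $G_n$ with tail $v$ having maximum label. $T$ is the spanning subgraph of $G_n$ with arc set $\{e(v): v\in V(G_n), v\neq m\}$. *)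

theory Defs
  imports Main
begin

(* u is a factor of the bi-infinite periodic sequence ...www... (w nonempty) *)
definition periodic_factor :: "'a list \<Rightarrow> 'a list \<Rightarrow> bool" where
  "periodic_factor w u \<longleftrightarrow>
     (\<exists>i::nat. \<forall>j<length u. u ! j = w ! ((i + j) mod length w))"

definition in_lang :: "'a list set \<Rightarrow> 'a list \<Rightarrow> bool" where
  "in_lang F w \<longleftrightarrow> w \<noteq> [] \<and> (\<forall>u\<in>F. \<not> periodic_factor w u)"

definition Wk :: "'a set \<Rightarrow> 'a list set \<Rightarrow> nat \<Rightarrow> 'a list set" where
  "Wk A F k = {w. length w = k \<and> set w \<subseteq> A \<and> in_lang F w}"

definition dB_arc :: "'a set \<Rightarrow> 'a list set \<Rightarrow> nat \<Rightarrow> 'a list \<Rightarrow> 'a list \<Rightarrow> bool" where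
  "dB_arc A F n u v \<longleftrightarrow>
     (\<exists>a b s. length s = n - 1 \<and> u = a # s \<and> v = s @ [b] \<and> a # s @ [b] \<in> Wk A F (n + 1))"

definition is_scc :: "'a set \<Rightarrow> 'a list set \<Rightarrow> nat \<Rightarrow> 'a list set \<Rightarrow> bool" where
  "is_scc A F n C \<longleftrightarrow> C \<noteq> {} \<and> (\<forall>x\<in>C. length x = n \<and> set x \<subseteq> A) \<and>
     (\<forall>x\<in>C. \<forall>y\<in>C. (dB_arc A F n)\<^sup>*\<^sup>* x y) \<and>
     (\<forall>x\<in>C. \<forall>y. (dB_arc A F n)\<^sup>*\<^sup>* x y \<and> (dB_arc A F n)\<^sup>*\<^sup>* y x \<longrightarrow> y \<in> C)"

(* C is a strongly connected component of maximum size: the vertex set of G_n *)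
definition is_max_scc :: "'a set \<Rightarrow> 'a list set \<Rightarrow> nat \<Rightarrow> 'a list set \<Rightarrow> bool" where
  "is_max_scc A F n C \<longleftrightarrow> is_scc A F n C \<and> (\<forall>C'. is_scc A F n C' \<longrightarrow> card C' \<le> card C)"

definition G_arc :: "'a set \<Rightarrow> 'a list set \<Rightarrow> nat \<Rightarrow> 'a list set \<Rightarrow> 'a list \<Rightarrow> 'a list \<Rightarrow> bool" where
  "G_arc A F n C u v \<longleftrightarrow> u \<in> C \<and> v \<in> C \<and> dB_arc A F n u v"

definition label :: "'a list \<Rightarrow> 'a list \<Rightarrow> 'a" where
  "label u v = last v"

definition is_lex_max :: "('a::linorder) list set \<Rightarrow> 'a list \<Rightarrow> bool" where
  "is_lex_max C m \<longleftrightarrow> m \<in> C \<and> (\<forall>v\<in>C. lexordp_eq v m)"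

definition T_arc :: "('a::linorder) set \<Rightarrow> 'a list set \<Rightarrow> nat \<Rightarrow> 'a list set \<Rightarrow> 'a list \<Rightarrow> 'a list \<Rightarrow> 'a list \<Rightarrow> bool" where
  "T_arc A F n C m u v \<longleftrightarrow> u \<noteq> m \<and> G_arc A F n C u v \<and>
     (\<forall>w. G_arc A F n C u w \<longrightarrow> label u w \<le> label u v)"

end

theory Submission
  imports Defs
begin

lemma rot1_lang:
  assumes "w \<in> Wk A F L" shows "rotate1 w \<in> Wk A F L"
proof -
  have ne: "w \<noteq> []" and il: "in_lang F w" and len: "length w = L" and st: "set w \<subseteq> A"
    using assms by (auto simp: Wk_def in_lang_def)
  have "\<not> periodic_factor (rotate1 w) u" if "u \<in> F" for u
  proof
    assume "periodic_factor (rotate1 w) u"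
    then obtain i where h: "\<forall>j<length u. u ! j = rotate1 w ! ((i + j) mod length w)"
      by (auto simp: periodic_factor_def)
    have "\<forall>j<length u. u ! j = w ! ((Suc i + j) mod length w)"
    proof (intro allI impI)
      fix j assume "j < length u"
      then have "u ! j = rotate1 w ! ((i + j) mod length w)" using h by auto
      also have "\<dots> = w ! (Suc ((i + j) mod length w) mod length w)"
        using ne by (simp add: nth_rotate1)
      also have "Suc ((i + j) mod length w) mod length w = (Suc i + j) mod length w"
        by (simp add: mod_Suc_eq)
      finally show "u ! j = w ! ((Suc i + j) mod length w)" .
    qed
    then have "periodic_factor w u" unfolding periodic_factor_def by (rule exI[of _ "Suc i"])
    then show False using il that by (auto simp: in_lang_def)
  qed
  then show ?thesis using assms ne by (auto simp: Wk_def in_lang_def)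
qed

lemma rot_lang: "w \<in> Wk A F L \<Longrightarrow> rotate j w \<in> Wk A F L"
  by (induction j) (auto simp: rot1_lang)

lemma arc_of:
  assumes "x \<in> Wk A F (n+1)" "n \<ge> 1"
  shows "dB_arc A F n (take n x) (drop 1 x)"
proof -
  have lx: "length x = n + 1" using assms by (auto simp: Wk_def)
  then obtain a y where x: "x = a # y" by (cases x) auto
  with lx assms(2) have "y \<noteq> []" by auto
  then obtain s b where y: "y = s @ [b]" by (cases y rule: rev_cases) auto
  have ls: "length s = n - 1" using lx x y by auto
  have "take n x = a # s" using x y ls assms(2) by (cases n) auto
  moreover have "drop 1 x = s @ [b]" using x y by auto
  ultimately show ?thesis unfolding dB_arc_def using ls assms(1) x y by auto
qed

lemma take_rot1:
  assumes "length x = n + 1" shows "take n (rotate1 x) = drop 1 x"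
  using assms by (cases x) auto

lemma chain:
  assumes "w \<in> Wk A F (n+1)" "n \<ge> 1"
  shows "(dB_arc A F n)\<^sup>*\<^sup>* (take n (rotate j w)) (take n (rotate (j+d) w))"
proof (induction d)
  case 0 then show ?case by simp
next
  case (Suc d)
  have r: "rotate (j+d) w \<in> Wk A F (n+1)" using rot_lang assms(1) by blast
  then have l: "length (rotate (j+d) w) = n+1" by (auto simp: Wk_def)
  have "dB_arc A F n (take n (rotate (j+d) w)) (drop 1 (rotate (j+d) w))"
    using arc_of[OF r assms(2)] .
  also have "drop 1 (rotate (j+d) w) = take n (rotate (j + Suc d) w)"
    using take_rot1[OF l] by (simp add: rotate_def)
  finally show ?case using Suc by (meson rtranclp.rtrancl_into_rtrancl)
qed

lemma arc_dec:
  assumes "dB_arc A F n u v" "n \<ge> 1"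
  shows "length u = n \<and> v = tl u @ [last v] \<and> u @ [last v] \<in> Wk A F (n+1)"
  using assms unfolding dB_arc_def by auto

theorem lemma2:
  fixes A :: "'a::linorder set" and F :: "'a list set" and n k :: nat
    and C :: "'a list set" and m :: "'a list" and vs :: "nat \<Rightarrow> 'a list"
  assumes "finite A"
    and "n \<ge> 1"
    and "is_max_scc A F n C"
    and "is_lex_max C m"
    and "k \<ge> n + 2"
    and "\<forall>i<k. T_arc A F n C m (vs i) (vs (Suc i))"
  shows "label (vs 0) (vs 1) \<le> label (vs (n + 1)) (vs (n + 2))"
proof -
  have arc: "dB_arc A F n (vs i) (vs (Suc i))" if "i \<le> n+1" for i
    using assms(5,6) that by (auto simp: T_arc_def G_arc_def)
  have dec: "length (vs i) = n \<and> vs (Suc i) = tl (vs i) @ [last (vs (Suc i))]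
      \<and> vs i @ [last (vs (Suc i))] \<in> Wk A F (n+1)" if "i \<le> n+1" for i
    using arc_dec[OF arc[OF that] assms(2)] .
  have idx: "vs j ! (n - j) = last (vs 1)" if "1 \<le> j" "j \<le> n" for j
    using that
  proof (induction j rule: dec_induct)
    case base
    have "length (vs 1) = n" using dec[of 1] assms(2) by auto
    then have "vs 1 \<noteq> []" using assms(2) by auto
    then show ?case using \<open>length (vs 1) = n\<close> by (simp add: last_conv_nth)
  next
    case (step j)
    have d: "length (vs j) = n" "vs (Suc j) = tl (vs j) @ [last (vs (Suc j))]"
      using dec[of j] step by auto
    have "vs (Suc j) ! (n - Suc j) = tl (vs j) ! (n - Suc j)"
    proof -
      define x where "x = last (vs (Suc j))"
      have e: "vs (Suc j) = tl (vs j) @ [x]" using d(2) x_def by simp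
      have "n - Suc j < length (tl (vs j))" using d(1) step by auto
      then show ?thesis unfolding e by (simp add: nth_append)
    qed
    also have "\<dots> = vs j ! (n - j)" using d step
      by (cases "vs j") (auto simp: Suc_diff_Suc)
    finally show ?case using step by simp
  qed
  define b0 where "b0 = last (vs 1)"
  define bn where "bn = last (vs (Suc n))"
  define w where "w = vs n @ [bn]"
  have dn: "length (vs n) = n" "vs (Suc n) = tl (vs n) @ [bn]" "w \<in> Wk A F (n+1)"
    using dec[of n] by (auto simp: w_def bn_def)
  have hd: "hd (vs n) = b0" using idx[of n] assms(2) dn(1)
    by (cases "vs n") (auto simp: b0_def)
  have wform: "w = b0 # tl (vs n) @ [bn]" using hd dn(1) assms(2) unfolding w_def
    by (cases "vs n") auto
  define u where "u = vs (Suc n)"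
  define t where "t = tl u @ [b0]"
  have lu: "length (tl (vs n) @ [bn]) = n" using dn(1) assms(2) by auto
  have u_eq: "u = take n (rotate 1 w)"
    using wform lu dn(1) assms(2) by (simp add: u_def dn(2))
  have t_eq: "t = take n (rotate 2 w)"
  proof -
    obtain a l where al: "tl (vs n) @ [bn] = a # l" by (cases "tl (vs n) @ [bn]") auto
    have ll: "length l = n - 1" using lu al by (metis length_tl list.sel(3))
    have "rotate 2 w = l @ [b0, a]" using wform al by (simp add: rotate_def numeral_2_eq_2)
    moreover have "t = l @ [b0]" using al by (simp add: t_def u_def dn(2))
    ultimately show ?thesis using ll assms(2) by simp
  qed
  have uC: "u \<in> C" using assms(5,6) by (auto simp: u_def T_arc_def G_arc_def)
  have ut: "(dB_arc A F n)\<^sup>*\<^sup>* u t"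
    using chain[OF dn(3) assms(2), of 1 1] u_eq t_eq by (simp add: rotate_def numeral_2_eq_2)
  have tu0: "(dB_arc A F n)\<^sup>*\<^sup>* t (take n (rotate (2 + n) w))"
    using chain[OF dn(3) assms(2), of 2 n] t_eq by simp
  have "rotate (2 + n) w = rotate 1 w"
  proof -
    have "rotate (2 + n) w = rotate 1 (rotate (n+1) w)" by (simp add: rotate_rotate)
    also have "rotate (n+1) w = w"
    proof -
      have "length w = n+1" using dn(3) by (simp add: Wk_def)
      then show ?thesis using rotate_length01[of w] by (metis mod_self rotate_id)
    qed
    finally show ?thesis .
  qed
  then have tu: "(dB_arc A F n)\<^sup>*\<^sup>* t u" using tu0 u_eq by simp
  have tC: "t \<in> C" using assms(3) uC ut tu unfolding is_max_scc_def is_scc_def by blast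
  have dbut: "dB_arc A F n u t"
  proof -
    have "dB_arc A F n (take n (rotate 1 w)) (drop 1 (rotate 1 w))"
      using arc_of[OF rot_lang[OF dn(3)] assms(2)] .
    moreover have "drop 1 (rotate 1 w) = take n (rotate 2 w)"
      using take_rot1[of "rotate 1 w" n] dn(3)
      by (simp add: Wk_def rotate_def numeral_2_eq_2)
    ultimately show ?thesis using u_eq t_eq by simp
  qed
  have "G_arc A F n C u t" using uC tC dbut by (simp add: G_arc_def)
  then have "label u t \<le> label u (vs (Suc (Suc n)))"
    using assms(5,6) by (auto simp: T_arc_def u_def)
  moreover have "label u t = b0" by (simp add: label_def t_def)
  ultimately show ?thesis by (simp add: label_def b0_def u_def)
qed

end
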